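(* The set $\widetilde K_2=\{A\in GU_3(\mathbb{Z}_2): A_{11}\equiv A_{22}\equiv A_{33}\equiv 1\pmod{2+2i}\}$ is a group, and $GU_3(\mathbb{Z}_2)=\widetilde K_2\rtimes GU_3(\mathbb{Z})$.
   Context: $GU_3(R)=\{g\in GL_3(R[i]):gg^*=\lambda I,\ \lambda\in R^\times\}$ with $g^*$ the conjugate transpose ($i\mapsto -i$); here $R[i]=\mathbb{Z}_2[i]$ for $R=\mathbb{Z}_2$. $GU_3(\mathbb{Z})$ is the group of monomial matrices with nonzero entries in $\{\pm1,\pm i\}$. *)

theory Defs
  imports "HOL-Analysis.Analysis" "HOL-Algebra.Algebra"
begin

section \<open>The 2-adic integers \<open>\<int>\<^sub>2\<close> as the inverse limit of \<open>\<int>/2^n\<close>\<close>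

typedef z2 = "{f :: nat \<Rightarrow> int. \<forall>n. 0 \<le> f n \<and> f n < 2^n \<and> f (Suc n) mod 2^n = f n}"
  by (rule exI[of _ "\<lambda>_. 0"]) simp

setup_lifting type_definition_z2

lemma z2_coh:
  fixes F :: "int \<Rightarrow> int \<Rightarrow> int"
  assumes F: "\<And>a b a' b' (m::int). a mod m = a' mod m \<Longrightarrow> b mod m = b' mod m \<Longrightarrow> F a b mod m = F a' b' mod m"
    and x: "\<And>n. 0 \<le> x n \<and> x n < 2^n \<and> x (Suc n) mod 2^n = x n"
    and y: "\<And>n. 0 \<le> y n \<and> y n < 2^n \<and> y (Suc n) mod 2^n = y n"
  shows "0 \<le> F (x n) (y n) mod 2^n \<and> F (x n) (y n) mod 2^n < 2^n
     \<and> F (x (Suc n)) (y (Suc n)) mod 2^(Suc n) mod 2^n = F (x n) (y n) mod 2^n"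
proof -
  have d: "(2::int)^n dvd 2^Suc n" by simp
  have "F (x (Suc n)) (y (Suc n)) mod 2^(Suc n) mod 2^n = F (x (Suc n)) (y (Suc n)) mod 2^n"
    using d by (simp add: mod_mod_cancel)
  also have "\<dots> = F (x n) (y n) mod 2^n"
    by (rule F) (use x y in auto)
  finally show ?thesis by simp
qed

instantiation z2 :: comm_ring_1
begin

lift_definition zero_z2 :: z2 is "\<lambda>n. 0" by simp
lift_definition one_z2 :: z2 is "\<lambda>n. (1::int) mod 2^n"
  apply (intro allI conjI)
    apply simp
   apply simp
  subgoal for n using mod_mod_cancel[of "(2::int)^n" "2^Suc n" 1] by (simp del: power_Suc)
  done
lift_definition plus_z2 :: "z2 \<Rightarrow> z2 \<Rightarrow> z2" is "\<lambda>f g n. (f n + g n) mod 2^n"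
  subgoal for f g n
    by (rule z2_coh[where F="(+)" and x=f and y=g and n=n]) (assumption | rule mod_add_cong)+
  done
lift_definition minus_z2 :: "z2 \<Rightarrow> z2 \<Rightarrow> z2" is "\<lambda>f g n. (f n - g n) mod 2^n"
  subgoal for f g n
    by (rule z2_coh[where F="(-)" and x=f and y=g and n=n]) (assumption | rule mod_diff_cong)+
  done
lift_definition times_z2 :: "z2 \<Rightarrow> z2 \<Rightarrow> z2" is "\<lambda>f g n. (f n * g n) mod 2^n"
  subgoal for f g n
    by (rule z2_coh[where F="(*)" and x=f and y=g and n=n]) (assumption | rule mod_mult_cong)+
  done
lift_definition uminus_z2 :: "z2 \<Rightarrow> z2" is "\<lambda>f n. (- f n) mod 2^n"
  subgoal for f n
    by (rule z2_coh[where F="\<lambda>a b. - a" and x=f and y=f and n=n]) (assumption | rule mod_minus_cong)+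
  done

lemma z2_rng: "\<forall>n::nat. 0 \<le> (f::nat\<Rightarrow>int) n \<and> f n < 2^n \<and> f (Suc n) mod 2^n = f n \<Longrightarrow> f n mod 2^n = f n"
  by (simp add: mod_pos_pos_trivial)

instance
proof
  fix a b c :: z2
  show "a * b * c = a * (b * c)"
    by transfer (rule ext, simp add: mod_mult_left_eq mod_mult_right_eq mult.assoc)
  show "a * b = b * a" by transfer (simp add: mult.commute)
  show "1 * a = a"
  proof transfer
    fix a :: "nat \<Rightarrow> int"
    assume A: "\<forall>n. 0 \<le> a n \<and> a n < 2^n \<and> a (Suc n) mod 2^n = a n"
    show "(\<lambda>n. ((1::int) mod 2^n * a n) mod 2^n) = a"
    proof
      fix n show "((1::int) mod 2^n * a n) mod 2^n = a n"
        using z2_rng[OF A, of n] mod_mult_left_eq[of "1::int" "2^n" "a n"] by simp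
    qed
  qed
  show "a + b + c = a + (b + c)"
    by transfer (rule ext, simp add: mod_add_left_eq mod_add_right_eq add.assoc)
  show "a + b = b + a" by transfer (simp add: add.commute)
  show "0 + a = a" by transfer (rule ext, simp add: z2_rng)
  show "- a + a = 0" by transfer (rule ext, simp add: mod_add_left_eq)
  show "a - b = a + - b" by transfer (rule ext, simp add: mod_add_right_eq)
  show "(a + b) * c = a * c + b * c"
    by transfer (rule ext, simp add: mod_mult_left_eq mod_add_eq distrib_right)
  show "(0::z2) \<noteq> 1" by transfer (auto simp: fun_eq_iff intro!: exI[of _ 1])
qed

end

datatype 'a gauss = Gauss (re: 'a) (im: 'a)

instantiation gauss :: (comm_ring_1) comm_ring_1
begin
definition "0 = Gauss 0 0"
definition "1 = Gauss 1 0"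
definition "x + y = Gauss (re x + re y) (im x + im y)"
definition "x - y = Gauss (re x - re y) (im x - im y)"
definition "- x = Gauss (- re x) (- im x)"
definition "x * y = Gauss (re x * re y - im x * im y) (re x * im y + im x * re y)"
instance
  by standard (auto simp: zero_gauss_def one_gauss_def plus_gauss_def minus_gauss_def
      uminus_gauss_def times_gauss_def algebra_simps intro: gauss.expand)
end

definition gi :: "'a::comm_ring_1 gauss" where "gi = Gauss 0 1"
definition gcnj :: "'a::comm_ring_1 gauss \<Rightarrow> 'a gauss" where "gcnj x = Gauss (re x) (- im x)"
definition gof :: "'a::comm_ring_1 \<Rightarrow> 'a gauss" where "gof a = Gauss a 0"

type_synonym mat3 = "z2 gauss ^ 3 ^ 3"

definition ctrans :: "mat3 \<Rightarrow> mat3" where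
  "ctrans g = (\<chi> i j. gcnj (g $ j $ i))"

definition GU3_Z2 :: "mat3 set" where
  "GU3_Z2 = {g. invertible g \<and> (\<exists>l::z2. l dvd 1 \<and> g ** ctrans g = mat (gof l))}"

definition GU3_Z2_grp :: "mat3 monoid" where
  "GU3_Z2_grp = \<lparr>carrier = GU3_Z2, mult = (**), one = mat 1\<rparr>"

text \<open>\<open>GU\<^sub>3(\<int>)\<close>, viewed inside \<open>GU\<^sub>3(\<int>\<^sub>2)\<close>: the monomial matrices with nonzero
  entries in \<open>{\<plusminus>1, \<plusminus>i}\<close>.\<close>
definition GU3_Z :: "mat3 set" where
  "GU3_Z = {g. \<exists>\<sigma> :: 3 \<Rightarrow> 3. \<exists>u :: 3 \<Rightarrow> z2 gauss. bij \<sigma> \<and> (\<forall>k. u k \<in> {1, -1, gi, - gi})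
              \<and> (\<forall>k l. g $ k $ l = (if l = \<sigma> k then u k else 0))}"

definition K2t :: "mat3 set" where
  "K2t = {A \<in> GU3_Z2. \<forall>k. (2 + 2 * gi) dvd (A $ k $ k - 1)}"

end

theory Submission
  imports Defs
begin

lemma z2_valid: "0 \<le> Rep_z2 a n \<and> Rep_z2 a n < 2^n \<and> Rep_z2 a (Suc n) mod 2^n = Rep_z2 a n"
  using Rep_z2[of a] by auto

lemma z2_par: "Rep_z2 a (Suc n) mod 2 = Rep_z2 a 1"
proof (induction n)
  case 0 then show ?case using z2_valid[of a 0] z2_valid[of a 1] by simp
next
  case (Suc n)
  have "Rep_z2 a (Suc (Suc n)) mod 2 = Rep_z2 a (Suc (Suc n)) mod 2^(Suc n) mod 2"
    by (simp add: mod_mod_cancel)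
  also have "\<dots> = Rep_z2 a (Suc n) mod 2" using z2_valid[of a "Suc n"] by simp
  finally show ?case using Suc by simp
qed

lemma z2_Z3: fixes a :: z2 assumes "a + a = 0" shows "a = 0"
proof -
  have h: "(Rep_z2 a n + Rep_z2 a n) mod 2^n = 0" for n
  proof -
    have "Rep_z2 (a+a) n = Rep_z2 0 n" using assms by simp
    then show ?thesis by (simp only: plus_z2.rep_eq zero_z2.rep_eq)
  qed
  have "Rep_z2 a n = 0" for n
  proof -
    have "(2::int)^Suc n dvd 2 * Rep_z2 a (Suc n)" using h[of "Suc n"] by (simp add: mod_eq_0_iff_dvd)
    then have "(2::int)^n dvd Rep_z2 a (Suc n)" by simp
    then show ?thesis using z2_valid[of a n] by (simp add: mod_eq_0_iff_dvd)
  qed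
  then have "Rep_z2 a = Rep_z2 0" by (simp add: fun_eq_iff zero_z2.rep_eq)
  then show ?thesis by (simp add: Rep_z2_inject)
qed

lemma z2_Z2: "(1::z2) \<noteq> b + b"
proof
  assume "1 = b + b"
  then have "Rep_z2 1 1 = Rep_z2 (b+b) 1" by simp
  then have "1 mod 2 = (Rep_z2 b 1 + Rep_z2 b 1) mod (2::int)" by (simp only: plus_z2.rep_eq one_z2.rep_eq) simp
  then show False by presburger
qed

lemma z2_Z1: "\<exists>b::z2. a = b + b \<or> a = b + b + 1"
proof -
  define g where "g = (\<lambda>n. Rep_z2 a (Suc n) div 2)"
  have gv: "g \<in> {f :: nat \<Rightarrow> int. \<forall>n. 0 \<le> f n \<and> f n < 2^n \<and> f (Suc n) mod 2^n = f n}"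
  proof (simp, intro allI conjI)
    fix n
    show "0 \<le> g n" using z2_valid[of a "Suc n"] by (simp add: g_def)
    have dl: "x < 2*m \<Longrightarrow> x div 2 < m" for x m :: int by presburger
    show "g n < 2^n" using z2_valid[of a "Suc n"] unfolding g_def by (simp add: dl)
    have "g (Suc n) mod 2^n = (Rep_z2 a (Suc (Suc n)) mod 2^Suc n) div 2"
      unfolding g_def by (simp add: zmod_zmult2_eq div_mult2_eq mod_mult2_eq  algebra_simps)
    then show "g (Suc n) mod 2^n = g n" using z2_valid[of a "Suc n"] by (simp add: g_def)
  qed
  define b where "b = Abs_z2 g"
  have rb: "Rep_z2 b = g" using gv by (simp add: b_def Abs_z2_inverse)
  have dec: "Rep_z2 a n = (2 * g n + Rep_z2 a 1) mod 2^n" for n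
  proof -
    have "Rep_z2 a (Suc n) = 2 * g n + Rep_z2 a (Suc n) mod 2" unfolding g_def by simp
    then have "Rep_z2 a (Suc n) = 2 * g n + Rep_z2 a 1" using z2_par by simp
    then show ?thesis using z2_valid[of a n] by metis
  qed
  have "Rep_z2 a 1 = 0 \<or> Rep_z2 a 1 = 1" using z2_valid[of a 1] by auto
  then show ?thesis
  proof
    assume "Rep_z2 a 1 = 0"
    then have "Rep_z2 (b+b) n = Rep_z2 a n" for n
      by (simp only: plus_z2.rep_eq rb) (simp add: dec[of n])
    then have "a = b + b" by (metis Rep_z2_inject ext)
    then show ?thesis by blast
  next
    assume "Rep_z2 a 1 = 1"
    then have "Rep_z2 (b+b+1) n = Rep_z2 a n" for n
      by (simp only: plus_z2.rep_eq one_z2.rep_eq rb) (simp add: dec[of n] mod_add_eq mod_add_left_eq)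
    then have "a = b + b + 1" by (metis Rep_z2_inject ext)
    then show ?thesis by blast
  qed
qed


section \<open>Gaussian algebra\<close>

type_synonym G = "z2 gauss"

lemma gauss_eq_iff: "(x::'a::comm_ring_1 gauss) = y \<longleftrightarrow> re x = re y \<and> im x = im y"
  by (cases x; cases y) auto

lemma re_simps[simp]:
  "re (x + y) = re x + re y" "im (x + y) = im x + im y"
  "re (x - y) = re x - re y" "im (x - y) = im x - im y"
  "re (- x) = - re x" "im (- x) = - im x"
  "re (x * y) = re x * re y - im x * im y" "im (x * y) = re x * im y + im x * re y"
  "re (0::'a::comm_ring_1 gauss) = 0" "im (0::'a::comm_ring_1 gauss) = 0"
  "re (1::'a::comm_ring_1 gauss) = 1" "im (1::'a::comm_ring_1 gauss) = 0"
  "re (gi::'a::comm_ring_1 gauss) = 0" "im (gi::'a::comm_ring_1 gauss) = 1"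
  "re (gof a) = a" "im (gof a) = 0"
  "re (gcnj x) = re x" "im (gcnj x) = - im x"
  by (simp_all add: plus_gauss_def minus_gauss_def uminus_gauss_def times_gauss_def
      zero_gauss_def one_gauss_def gi_def gof_def gcnj_def)

lemma gi_sq: "(gi::'a::comm_ring_1 gauss) * gi = -1"
  by (simp add: gauss_eq_iff)

lemma gcnj_simps[simp]:
  "gcnj (x + y) = gcnj x + gcnj y" "gcnj (x - y) = gcnj x - gcnj y"
  "gcnj (x * y) = gcnj x * gcnj y" "gcnj (- x) = - gcnj x"
  "gcnj (0::'a::comm_ring_1 gauss) = 0" "gcnj (1::'a::comm_ring_1 gauss) = 1"
  "gcnj (gi::'a::comm_ring_1 gauss) = - gi" "gcnj (gof a) = gof a" "gcnj (gcnj x) = x"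
  by (simp_all add: gauss_eq_iff algebra_simps)

lemma gcnj_pow[simp]: "gcnj (x ^ n) = gcnj x ^ n"
  by (induction n) auto

lemma gof_simps[simp]:
  "gof (a + b) = gof a + gof b" "gof (a - b) = gof a - gof b" "gof (a * b) = gof a * gof b"
  "gof (- a) = - gof a" "gof (0::'a::comm_ring_1) = 0" "gof (1::'a::comm_ring_1) = 1"
  by (simp_all add: gauss_eq_iff)

lemma gauss_decomp: "(x::'a::comm_ring_1 gauss) = gof (re x) + gi * gof (im x)"
  by (simp add: gauss_eq_iff)

definition p :: G where "p = 1 + gi"

lemma re_numeral[simp]: "re (numeral n :: 'a::comm_ring_1 gauss) = numeral n" "im (numeral n :: 'a::comm_ring_1 gauss) = 0"
  by (induction n) (simp_all only: numeral_Bit0 numeral_Bit1 numeral_One re_simps, simp_all)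

lemma gof_numeral[simp]: "gof (numeral n) = numeral n"
  by (simp add: gauss_eq_iff)

lemma two_eq: "(2::G) = - gi * p * p"
  unfolding p_def by (simp add: gauss_eq_iff algebra_simps power3_eq_cube)

lemma cnj_p: "gcnj p = - gi * p"
  unfolding p_def by (simp add: gauss_eq_iff algebra_simps power3_eq_cube)

lemma K_eq: "(2::G) + 2 * gi = - gi * p ^ 3"
  unfolding p_def by (simp add: gauss_eq_iff algebra_simps power3_eq_cube)

lemma p_dvd_2: "p dvd (2::G)"
  using two_eq by (metis dvd_triv_right mult.assoc mult.commute)

lemma not_p_dvd_1: "\<not> p dvd (1::G)"
proof
  assume "p dvd 1"
  then obtain y where y: "1 = p * y" by (auto simp: dvd_def)
  have "re (p*y) = 1" "im (p * y) = 0" using y[symmetric] by simp_all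
  moreover have "re y + re y = re (p*y) + im (p*y)" by (simp add: p_def algebra_simps)
  ultimately have "1 = re y + re y" by simp
  then show False using z2_Z2 by blast
qed

lemma p_cancel0: "p * (x::G) = 0 \<Longrightarrow> x = 0"
proof -
  assume a: "p * x = 0"
  have "(2::G) * x = 0"
  proof -
    have "(2::G) * x = (1 - gi) * (p * x)" unfolding p_def by (simp add: gauss_eq_iff algebra_simps power3_eq_cube)
    then show ?thesis using a by simp
  qed
  then have "re (2*x) = 0" "im (2*x) = 0" by simp_all
  then have "2 * re x = 0" "2 * im x = 0" by simp_all
  then have "re x + re x = 0" "im x + im x = 0" by (simp_all only: mult_2)
  then show "x = 0" using z2_Z3 by (simp add: gauss_eq_iff)
qed

lemma p_cancel: "p * (x::G) = p * y \<Longrightarrow> x = y"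
  using p_cancel0[of "x - y"] by (simp add: algebra_simps)

lemma p_dvd_cancel: "p * x dvd p * (y::G) \<Longrightarrow> x dvd y"
proof -
  assume "p * x dvd p * y"
  then obtain k where "p * y = p * x * k" by (auto simp: dvd_def)
  then have "p * y = p * (x * k)" by (simp add: mult.assoc)
  then have "y = x * k" by (rule p_cancel)
  then show ?thesis by simp
qed

lemma R1: "p dvd (x::G) \<or> p dvd (x - 1)"
proof -
  obtain a where a: "re x = a + a \<or> re x = a + a + 1" using z2_Z1 by blast
  obtain b where b: "im x = b + b \<or> im x = b + b + 1" using z2_Z1 by blast
  define y where "y = gof a + gi * gof b"
  have p2: "p dvd 2 * y" using p_dvd_2 by simp
  have gim: "(gi::G) - 1 = gi * p"
    unfolding p_def by (simp add: gauss_eq_iff algebra_simps power3_eq_cube)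
  have x: "x = gof (re x) + gi * gof (im x)" by (rule gauss_decomp)
  from a b show ?thesis
  proof (elim disjE)
    assume "re x = a + a" "im x = b + b"
    then have "x = 2 * y" using x by (simp add: y_def algebra_simps)
    then show ?thesis using p2 by simp
  next
    assume "re x = a + a" "im x = b + b + 1"
    then have "x - 1 = 2 * y + (gi - 1)" using x by (simp add: y_def algebra_simps)
    then show ?thesis using p2 gim by simp
  next
    assume "re x = a + a + 1" "im x = b + b"
    then have "x - 1 = 2 * y" using x by (simp add: y_def algebra_simps)
    then show ?thesis using p2 by simp
  next
    assume "re x = a + a + 1" "im x = b + b + 1"
    then have "x = 2 * y + p" using x by (simp add: y_def algebra_simps p_def)
    then show ?thesis using p2 by simp
  qed
qed

definition r :: "G \<Rightarrow> bool" where "r x \<longleftrightarrow> \<not> p dvd x"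

lemma r_alt: "r x \<longleftrightarrow> p dvd (x - 1)"
proof
  assume "r x" then show "p dvd (x - 1)" using R1[of x] unfolding r_def by blast
next
  assume a: "p dvd (x - 1)"
  show "r x"
  proof (rule ccontr)
    assume "\<not> r x"
    then have "p dvd x" by (simp add: r_def)
    then have "p dvd x - (x - 1)" using a by (rule dvd_diff)
    then show False using not_p_dvd_1 by simp
  qed
qed

lemma not_both: "p dvd x \<Longrightarrow> p dvd x - 1 \<Longrightarrow> False"
  using r_alt r_def by blast

lemma r_one[simp]: "r 1" using not_p_dvd_1 r_def by blast
lemma r_zero[simp]: "\<not> r 0" by (simp add: r_def)

lemma r_mult[simp]: "r (x * y) \<longleftrightarrow> r x \<and> r y"
proof -
  have "r x \<Longrightarrow> r y \<Longrightarrow> r (x*y)"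
  proof -
    assume "r x" "r y"
    then have "p dvd (x - 1) * y + (y - 1)" by (simp add: r_alt)
    then have "p dvd x * y - 1" by (simp add: algebra_simps)
    then show "r (x * y)" by (simp add: r_alt)
  qed
  moreover have "r (x * y) \<Longrightarrow> r x \<and> r y" unfolding r_def by auto
  ultimately show ?thesis by blast
qed

lemma r_add[simp]: "r (x + y) \<longleftrightarrow> r x \<noteq> r y"
proof -
  have d: "(x + y) - 1 = x + (y - 1)" "(x + y) - 1 = (x - 1) + y" "x + y = (x - 1) + (y - 1) + 2"
    by (simp_all add: algebra_simps)
  consider "p dvd x" "p dvd y" | "p dvd x" "p dvd y - 1" | "p dvd x - 1" "p dvd y" | "p dvd x - 1" "p dvd y - 1"
    using R1[of x] R1[of y] by blast
  then show ?thesis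
  proof cases
    case 1 then show ?thesis by (simp add: r_def)
  next
    case 2 then have "p dvd (x + y) - 1" by (simp only: d(1)) (rule dvd_add)
    with 2 show ?thesis using not_both[of x] not_both[of y] not_both[of "x+y"] unfolding r_def by blast
  next
    case 3 then have "p dvd (x + y) - 1" by (simp only: d(2)) (rule dvd_add)
    with 3 show ?thesis using not_both[of x] not_both[of y] not_both[of "x+y"] unfolding r_def by blast
  next
    case 4 then have "p dvd (x + y)" by (simp only: d(3)) (intro dvd_add p_dvd_2)
    with 4 show ?thesis using not_both[of x] not_both[of y] not_both[of "x+y"] unfolding r_def by blast
  qed
qed

lemma r_minus[simp]: "r (- x) = r x" by (simp add: r_def)
lemma r_diff[simp]: "r (x - y) \<longleftrightarrow> r x \<noteq> r y"
  using r_add[of x "- y"] by simp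

lemma r_gi[simp]: "r gi"
proof -
  have "gi * gi = (-1::G)" by (rule gi_sq)
  then have "r (gi * gi)" by simp
  then show ?thesis by simp
qed

lemma r_p[simp]: "\<not> r p" by (simp add: r_def)

lemma cnj_diff_dvd: "p dvd (gcnj x - x)"
proof -
  have "gcnj x - x = - (2 * (gi * gof (im x)))"
    by (simp add: gauss_eq_iff)
  then show ?thesis using p_dvd_2 by simp
qed

lemma r_cnj[simp]: "r (gcnj x) = r x"
proof -
  have "gcnj x = (gcnj x - x) + x" by simp
  then have "p dvd gcnj x \<longleftrightarrow> p dvd x" using dvd_add_right_iff[OF cnj_diff_dvd[of x], of x] by simp
  then show ?thesis by (simp add: r_def)
qed

lemma r_gof_unit: "l dvd (1::z2) \<Longrightarrow> r (gof l)"
proof -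
  assume "l dvd 1"
  then obtain m where "1 = l * m" by (auto simp: dvd_def)
  then have "gof l * gof m = 1" by (metis gof_simps(3) gof_simps(6))
  then have "r (gof l * gof m)" by simp
  then show ?thesis by simp
qed

lemma dvd_cnj: "p ^ n dvd x \<Longrightarrow> p ^ n dvd gcnj x"
proof -
  assume "p ^ n dvd x"
  then obtain y where "x = p ^ n * y" by (auto simp: dvd_def)
  then have "gcnj x = (gcnj p)^n * gcnj y" by simp
  also have "\<dots> = (-gi)^n * p^n * gcnj y" by (simp only: cnj_p power_mult_distrib)
  finally show ?thesis by (metis dvd_mult dvd_mult2 dvd_refl)
qed


lemma mm_nth: "(A ** B) $ i $ j = (\<Sum>k\<in>UNIV. A$i$k * B$k$j)"
  by (simp add: matrix_matrix_mult_def)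
lemma ct_nth[simp]: "ctrans A $ i $ j = gcnj (A $ j $ i)"
  by (simp add: ctrans_def)
lemma mat_nth: "mat c $ i $ j = (if i = j then c else 0)"
  by (simp add: mat_def)

definition smat :: "G \<Rightarrow> mat3 \<Rightarrow> mat3" where "smat c A = (\<chi> i j. c * A$i$j)"
lemma smat_nth[simp]: "smat c A $ i $ j = c * A $ i $ j" by (simp add: smat_def)

lemma mat_mult_left: "mat c ** (A::mat3) = smat c A"
  by (simp add: vec_eq_iff mm_nth mat_nth if_distrib if_distribR sum.delta cong: if_cong)
lemma mat_mult_right: "(A::mat3) ** mat c = smat c A"
  by (simp add: vec_eq_iff mm_nth mat_nth if_distrib if_distribR sum.delta' mult.commute cong: if_cong)
lemma smat_mult_left: "smat c A ** B = smat c (A ** B)"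
  by (simp add: vec_eq_iff mm_nth sum_distrib_left mult.assoc)
lemma smat_mult_right: "A ** smat c B = smat c (A ** B)"
  by (simp add: vec_eq_iff mm_nth sum_distrib_left mult.left_commute)
lemma smat_smat: "smat c (smat d A) = smat (c*d) A"
  by (simp add: vec_eq_iff mult.assoc)
lemma smat_mat: "smat c (mat d) = mat (c*d)"
  by (simp add: vec_eq_iff mat_nth)
lemma gcnj_sum: "gcnj (sum f A) = (\<Sum>x\<in>A. gcnj (f x))"
  using sum_comp_morphism[of gcnj f A] by (simp add: o_def)

lemma ct_mult: "ctrans (A ** B) = ctrans B ** ctrans A"
  by (simp add: vec_eq_iff mm_nth gcnj_sum mult.commute)
lemma ct_ct[simp]: "ctrans (ctrans A) = A" by (simp add: vec_eq_iff)
lemma ct_smat: "ctrans (smat c A) = smat (gcnj c) (ctrans A)" by (simp add: vec_eq_iff)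
lemma ct_mat: "ctrans (mat c) = mat (gcnj c)" by (simp add: vec_eq_iff mat_nth)

lemma GU_E:
  assumes "A \<in> GU3_Z2"
  obtains l where "l dvd 1" "A ** ctrans A = mat (gof l)" "ctrans A ** A = mat (gof l)"
proof -
  from assms obtain l where l: "l dvd 1" "A ** ctrans A = mat (gof l)" and inv: "invertible A"
    by (auto simp: GU3_Z2_def)
  from inv obtain A' where A': "A ** A' = mat 1" "A' ** A = mat 1" by (auto simp: invertible_def)
  have "ctrans A = A' ** A ** ctrans A" using A' by simp
  also have "\<dots> = smat (gof l) A'" using l by (simp add: matrix_mul_assoc[symmetric] mat_mult_right)
  finally have "ctrans A ** A = mat (gof l)" using A' by (simp add: smat_mult_left smat_mat)
  with l that show ?thesis by blast
qed

lemma GU_inv: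
  assumes "A \<in> GU3_Z2" "A ** ctrans A = mat (gof l)" "ctrans A ** A = mat (gof l)" "l * m = 1"
  shows "smat (gof m) (ctrans A) \<in> GU3_Z2" "smat (gof m) (ctrans A) ** A = mat 1"
    "A ** smat (gof m) (ctrans A) = mat 1"
proof -
  have gm: "gof l * gof m = 1" "gof m * gof l = 1" using assms(4) by (simp_all only: gof_simps(3)[symmetric] mult.commute[of m l] gof_simps(6))
  show 1: "smat (gof m) (ctrans A) ** A = mat 1" using assms gm by (simp add: smat_mult_left smat_mat)
  show 2: "A ** smat (gof m) (ctrans A) = mat 1" using assms gm by (simp add: smat_mult_right smat_mat)
  have "smat (gof m) (ctrans A) ** ctrans (smat (gof m) (ctrans A)) = mat (gof (m * m * l))"
    by (simp add: ct_smat smat_mult_left smat_mult_right smat_smat smat_mat assms mult.commute mult.left_commute)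
  moreover have "m * m * l dvd 1"
  proof -
    have "m * m * l = m * (l * m)" by (simp add: mult_ac)
    then have "m * m * l = m" using assms(4) by simp
    moreover have "m dvd 1" using assms(4) unfolding dvd_def by (metis mult.commute)
    ultimately show ?thesis by simp
  qed
  moreover have "invertible (smat (gof m) (ctrans A))" using 1 2 by (auto simp: invertible_def)
  ultimately show "smat (gof m) (ctrans A) \<in> GU3_Z2" unfolding GU3_Z2_def by blast
qed

lemma GU_mult:
  assumes "A \<in> GU3_Z2" "B \<in> GU3_Z2" shows "A ** B \<in> GU3_Z2"
proof -
  obtain l where l: "l dvd 1" "A ** ctrans A = mat (gof l)" "ctrans A ** A = mat (gof l)" using GU_E[OF assms(1)] by blast
  obtain k where k: "k dvd 1" "B ** ctrans B = mat (gof k)" "ctrans B ** B = mat (gof k)" using GU_E[OF assms(2)] by blast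
  obtain l' where "1 = l * l'" using l(1) by (rule dvdE)
  then have l': "l * l' = 1" by simp
  obtain k' where "1 = k * k'" using k(1) by (rule dvdE)
  then have k': "k * k' = 1" by simp
  define A' where "A' = smat (gof l') (ctrans A)"
  define B' where "B' = smat (gof k') (ctrans B)"
  have A': "A' ** A = mat 1" "A ** A' = mat 1" using GU_inv[OF assms(1) l(2,3) l'] by (simp_all add: A'_def)
  have B': "B' ** B = mat 1" "B ** B' = mat 1" using GU_inv[OF assms(2) k(2,3) k'] by (simp_all add: B'_def)
  have "(A ** B) ** (B' ** A') = A ** ((B ** B') ** A')" by (simp add: matrix_mul_assoc)
  then have "(A ** B) ** (B' ** A') = mat 1" using A' B' by simp
  moreover have "(B' ** A') ** (A ** B) = B' ** ((A' ** A) ** B)" by (simp add: matrix_mul_assoc)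
  then have "(B' ** A') ** (A ** B) = mat 1" using A' B' by simp
  ultimately have inv: "invertible (A ** B)" by (auto simp: invertible_def)
  have "(A ** B) ** ctrans (A ** B) = A ** (B ** ctrans B) ** ctrans A"
    by (simp add: ct_mult matrix_mul_assoc)
  also have "\<dots> = mat (gof (k * l))"
    by (simp add: k l mat_mult_right smat_mult_left smat_mat)
  finally have e: "(A ** B) ** ctrans (A ** B) = mat (gof (k * l))" .
  have "k * l dvd 1" using mult_dvd_mono[OF k(1) l(1)] by simp
  then show ?thesis using inv e unfolding GU3_Z2_def by blast
qed

lemma GU_one: "mat 1 \<in> GU3_Z2"
proof -
  have "(mat 1::mat3) ** ctrans (mat 1) = mat (gof 1)" by (simp add: ct_mat)
  moreover have "invertible (mat 1 :: mat3)" unfolding invertible_def by (rule exI[of _ "mat 1"]) simp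
  ultimately show ?thesis unfolding GU3_Z2_def by (intro CollectI conjI exI[of _ 1]) auto
qed

lemma GU_carrier[simp]: "carrier GU3_Z2_grp = GU3_Z2" by (simp add: GU3_Z2_grp_def)
lemma GU_mult_eq[simp]: "x \<otimes>\<^bsub>GU3_Z2_grp\<^esub> y = x ** y" by (simp add: GU3_Z2_grp_def)
lemma GU_one_eq[simp]: "\<one>\<^bsub>GU3_Z2_grp\<^esub> = mat 1" by (simp add: GU3_Z2_grp_def)

lemma group_GU: "group GU3_Z2_grp"
proof (rule groupI)
  fix x y z
  show "x \<otimes>\<^bsub>GU3_Z2_grp\<^esub> y \<in> carrier GU3_Z2_grp" if "x \<in> carrier GU3_Z2_grp" "y \<in> carrier GU3_Z2_grp"
    using that GU_mult by (simp only: GU_carrier GU_mult_eq)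
  show "\<one>\<^bsub>GU3_Z2_grp\<^esub> \<in> carrier GU3_Z2_grp" using GU_one by (simp only: GU_carrier GU_one_eq)
  show "x \<otimes>\<^bsub>GU3_Z2_grp\<^esub> y \<otimes>\<^bsub>GU3_Z2_grp\<^esub> z = x \<otimes>\<^bsub>GU3_Z2_grp\<^esub> (y \<otimes>\<^bsub>GU3_Z2_grp\<^esub> z)"
    by (simp only: GU_mult_eq matrix_mul_assoc)
  show "\<one>\<^bsub>GU3_Z2_grp\<^esub> \<otimes>\<^bsub>GU3_Z2_grp\<^esub> x = x" by (simp only: GU_mult_eq GU_one_eq matrix_mul_lid)
  show "\<exists>y\<in>carrier GU3_Z2_grp. y \<otimes>\<^bsub>GU3_Z2_grp\<^esub> x = \<one>\<^bsub>GU3_Z2_grp\<^esub>" if "x \<in> carrier GU3_Z2_grp"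
  proof -
    have x: "x \<in> GU3_Z2" using that by (simp only: GU_carrier)
    obtain l where l: "l dvd 1" "x ** ctrans x = mat (gof l)" "ctrans x ** x = mat (gof l)" using GU_E[OF x] by blast
    obtain m where "1 = l * m" using l(1) by (rule dvdE)
    then have "l * m = 1" by simp
    from GU_inv[OF x l(2,3) this] show ?thesis by (simp only: GU_carrier GU_mult_eq GU_one_eq) blast
  qed
qed

lemma GU_inv_eq:
  assumes "A \<in> GU3_Z2" "A ** ctrans A = mat (gof l)" "ctrans A ** A = mat (gof l)" "l * m = 1"
  shows "inv\<^bsub>GU3_Z2_grp\<^esub> A = smat (gof m) (ctrans A)"
  by (rule group.inv_equality[OF group_GU]) (simp_all only: GU_carrier GU_mult_eq GU_one_eq GU_inv[OF assms] assms(1))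


definition monom :: "(3 \<Rightarrow> 3) \<Rightarrow> (3 \<Rightarrow> G) \<Rightarrow> mat3" where
  "monom \<sigma> u = (\<chi> k l. if l = \<sigma> k then u k else 0)"

definition U4 :: "G set" where "U4 = {1, -1, gi, - gi}"

lemma monom_nth: "monom \<sigma> u $ k $ l = (if l = \<sigma> k then u k else 0)"
  by (simp add: monom_def)

lemma GU3_Z_eq: "GU3_Z = {monom \<sigma> u | \<sigma> u. bij \<sigma> \<and> (\<forall>k. u k \<in> U4)}"
proof -
  have eq: "(\<forall>k l. g $ k $ l = (if l = \<sigma> k then u k else 0)) \<longleftrightarrow> g = monom \<sigma> u" for \<sigma> u and g :: mat3
    by (simp add: vec_eq_iff monom_nth)
  have gz: "g \<in> GU3_Z \<longleftrightarrow> (\<exists>\<sigma> u. bij \<sigma> \<and> (\<forall>k. u k \<in> U4) \<and> g = monom \<sigma> u)" for g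
    unfolding GU3_Z_def mem_Collect_eq eq U4_def ..
  show ?thesis
  proof (intro Set.set_eqI iffI)
    fix g assume "g \<in> GU3_Z"
    then obtain \<sigma> u where "bij \<sigma>" "\<forall>k. u k \<in> U4" "g = monom \<sigma> u" using gz by blast
    then show "g \<in> {monom \<sigma> u | \<sigma> u. bij \<sigma> \<and> (\<forall>k. u k \<in> U4)}" by blast
  next
    fix g assume "g \<in> {monom \<sigma> u | \<sigma> u. bij \<sigma> \<and> (\<forall>k. u k \<in> U4)}"
    then obtain \<sigma> u where "bij \<sigma>" "\<forall>k. u k \<in> U4" "g = monom \<sigma> u" by blast
    then show "g \<in> GU3_Z" using gz by blast
  qed
qed

lemma monom_mult: "monom \<sigma> u ** monom \<tau> v = monom (\<tau> \<circ> \<sigma>) (\<lambda>k. u k * v (\<sigma> k))"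
proof -
  have "(\<Sum>j\<in>UNIV. (if j = \<sigma> k then u k else 0) * (if l = \<tau> j then v j else 0))
      = (if l = \<tau> (\<sigma> k) then u k * v (\<sigma> k) else 0)" for k l
  proof -
    have "(\<Sum>j\<in>UNIV. (if j = \<sigma> k then u k else 0) * (if l = \<tau> j then v j else 0))
      = (\<Sum>j\<in>UNIV. if j = \<sigma> k then u k * (if l = \<tau> j then v j else 0) else 0)"
      by (rule sum.cong) auto
    also have "\<dots> = u k * (if l = \<tau> (\<sigma> k) then v (\<sigma> k) else 0)"
      by (simp only: sum.delta[OF finite]) simp
    finally show ?thesis by simp
  qed
  then show ?thesis by (simp add: vec_eq_iff mm_nth monom_nth)
qed

lemma ct_monom: assumes b: "bij \<sigma>" shows "ctrans (monom \<sigma> u) = monom (inv_into UNIV \<sigma>) (\<lambda>k. gcnj (u (inv_into UNIV \<sigma> k)))"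
proof -
  have inj: "inj \<sigma>" using b bij_is_inj by blast
  have "gcnj (if k = \<sigma> l then u l else 0) = (if l = inv_into UNIV \<sigma> k then gcnj (u (inv_into UNIV \<sigma> k)) else 0)" for k l
  proof (cases "k = \<sigma> l")
    case True
    then have "inv_into UNIV \<sigma> k = l" using inv_f_f[OF inj] by simp
    then show ?thesis using True by simp
  next
    case False
    then have "l \<noteq> inv_into UNIV \<sigma> k" using bij_inv_eq_iff[OF b] by metis
    then show ?thesis using False by simp
  qed
  then show ?thesis by (simp add: vec_eq_iff monom_nth)
qed

lemma U4_cnj: "u \<in> U4 \<Longrightarrow> u * gcnj u = 1" "u \<in> U4 \<Longrightarrow> gcnj u * u = 1" "u \<in> U4 \<Longrightarrow> gcnj u \<in> U4"
  by (auto simp: U4_def gi_sq)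

lemma U4_mult: "u \<in> U4 \<Longrightarrow> v \<in> U4 \<Longrightarrow> u * v \<in> U4"
  by (auto simp: U4_def gi_sq)

lemma monom_id: "monom id (\<lambda>_. 1) = mat 1"
  by (auto simp: vec_eq_iff monom_nth mat_nth)

lemma monom_unitary:
  assumes "bij \<sigma>" "\<forall>k. u k \<in> U4"
  shows "monom \<sigma> u ** ctrans (monom \<sigma> u) = mat 1" "ctrans (monom \<sigma> u) ** monom \<sigma> u = mat 1"
proof -
  have i1: "inv_into UNIV \<sigma> \<circ> \<sigma> = id" using assms(1) bij_is_inj inj_iff by blast
  have i2: "\<sigma> \<circ> inv_into UNIV \<sigma> = id" using assms(1) bij_is_surj surj_iff by blast
  have i3: "inv_into UNIV \<sigma> (\<sigma> k) = k" for k using i1 by (metis comp_apply id_apply)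
  have "monom \<sigma> u ** ctrans (monom \<sigma> u) = monom (inv_into UNIV \<sigma> \<circ> \<sigma>) (\<lambda>k. u k * gcnj (u (inv_into UNIV \<sigma> (\<sigma> k))))"
    by (simp only: ct_monom[OF assms(1)] monom_mult)
  also have "\<dots> = monom id (\<lambda>_. 1)" using assms(2) by (simp only: i1 i3 U4_cnj)
  finally show "monom \<sigma> u ** ctrans (monom \<sigma> u) = mat 1" by (simp only: monom_id)
  have "ctrans (monom \<sigma> u) ** monom \<sigma> u = monom (\<sigma> \<circ> inv_into UNIV \<sigma>) (\<lambda>k. gcnj (u (inv_into UNIV \<sigma> k)) * u (inv_into UNIV \<sigma> k))"
    by (simp only: ct_monom[OF assms(1)] monom_mult)
  also have "\<dots> = monom id (\<lambda>_. 1)" using assms(2) by (simp only: i2 U4_cnj)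
  finally show "ctrans (monom \<sigma> u) ** monom \<sigma> u = mat 1" by (simp only: monom_id)
qed

lemma GU3_Z_sub: "GU3_Z \<subseteq> GU3_Z2"
proof
  fix M assume "M \<in> GU3_Z"
  then obtain \<sigma> u where M: "M = monom \<sigma> u" "bij \<sigma>" "\<forall>k. u k \<in> U4" by (auto simp: GU3_Z_eq)
  have "M ** ctrans M = mat (gof 1)" "invertible M"
    using monom_unitary[OF M(2,3)] unfolding M(1) invertible_def by auto
  then show "M \<in> GU3_Z2" unfolding GU3_Z2_def by (intro CollectI conjI exI[of _ 1]) auto
qed

lemma GU3_Z_inv: "M \<in> GU3_Z \<Longrightarrow> inv\<^bsub>GU3_Z2_grp\<^esub> M = ctrans M"
proof -
  assume a: "M \<in> GU3_Z"
  then obtain \<sigma> u where M: "M = monom \<sigma> u" "bij \<sigma>" "\<forall>k. u k \<in> U4" by (auto simp: GU3_Z_eq)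
  have "M ** ctrans M = mat (gof 1)" "ctrans M ** M = mat (gof 1)"
    using monom_unitary[OF M(2,3)] unfolding M(1) by auto
  from GU_inv_eq[OF _ this, of 1] a GU3_Z_sub show ?thesis by (auto simp: smat_def vec_eq_iff)
qed

lemma ct_GU3_Z: "M \<in> GU3_Z \<Longrightarrow> ctrans M \<in> GU3_Z"
proof -
  assume "M \<in> GU3_Z"
  then obtain \<sigma> u where M: "M = monom \<sigma> u" "bij \<sigma>" "\<forall>k. u k \<in> U4" by (auto simp: GU3_Z_eq)
  then show ?thesis unfolding GU3_Z_eq using M
    by (intro CollectI exI[of _ "inv_into UNIV \<sigma>"] exI[of _ "\<lambda>k. gcnj (u (inv_into UNIV \<sigma> k))"])
       (auto simp: ct_monom bij_imp_bij_inv U4_cnj)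
qed

lemma subgroup_GU3_Z: "subgroup GU3_Z GU3_Z2_grp"
proof (rule group.subgroupI[OF group_GU])
  show "GU3_Z \<subseteq> carrier GU3_Z2_grp" using GU3_Z_sub by simp
  have "mat 1 \<in> GU3_Z" unfolding GU3_Z_eq mem_Collect_eq
    by (intro exI[of _ id] exI[of _ "\<lambda>_. 1::G"]) (simp add: U4_def monom_id)
  then show "GU3_Z \<noteq> {}" by blast
  show "inv\<^bsub>GU3_Z2_grp\<^esub> a \<in> GU3_Z" if "a \<in> GU3_Z" for a
    using that GU3_Z_inv ct_GU3_Z by simp
  show "a \<otimes>\<^bsub>GU3_Z2_grp\<^esub> b \<in> GU3_Z" if ha: "a \<in> GU3_Z" and hb: "b \<in> GU3_Z" for a b
  proof -
    obtain \<sigma> u where a: "a = monom \<sigma> u" "bij \<sigma>" "\<forall>k. u k \<in> U4" using ha by (auto simp: GU3_Z_eq)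
    obtain \<tau> v where b: "b = monom \<tau> v" "bij \<tau>" "\<forall>k. v k \<in> U4" using hb by (auto simp: GU3_Z_eq)
    show ?thesis unfolding GU3_Z_eq mem_Collect_eq GU_mult_eq using a b
      by (intro exI[of _ "\<tau> \<circ> \<sigma>"] exI[of _ "\<lambda>k. u k * v (\<sigma> k)"]) (auto simp: monom_mult bij_comp U4_mult)
  qed
qed


section \<open>Reduction mod p: the permutation\<close>

lemma three_distinct: "(1::3) \<noteq> 2" "(1::3) \<noteq> 3" "(2::3) \<noteq> 3" "(2::3) \<noteq> 1" "(3::3) \<noteq> 1" "(3::3) \<noteq> 2"
  by simp_all

lemma comb9:
  fixes a1 a2 a3 b1 b2 b3 c1 c2 c3 :: bool
  assumes "(a1 \<noteq> a2) \<noteq> a3" "(b1 \<noteq> b2) \<noteq> b3" "(c1 \<noteq> c2) \<noteq> c3"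
    "\<not> (((a1 \<and> b1) \<noteq> (a2 \<and> b2)) \<noteq> (a3 \<and> b3))"
    "\<not> (((a1 \<and> c1) \<noteq> (a2 \<and> c2)) \<noteq> (a3 \<and> c3))"
    "\<not> (((b1 \<and> c1) \<noteq> (b2 \<and> c2)) \<noteq> (b3 \<and> c3))"
  shows "\<not> (a1 \<and> a2)" "\<not> (a1 \<and> a3)" "\<not> (a2 \<and> a3)"
    "\<not> (b1 \<and> b2)" "\<not> (b1 \<and> b3)" "\<not> (b2 \<and> b3)"
    "\<not> (c1 \<and> c2)" "\<not> (c1 \<and> c3)" "\<not> (c2 \<and> c3)"
    "\<not> (a1 \<and> b1)" "\<not> (a2 \<and> b2)" "\<not> (a3 \<and> b3)"
    "\<not> (a1 \<and> c1)" "\<not> (a2 \<and> c2)" "\<not> (a3 \<and> c3)"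
    "\<not> (b1 \<and> c1)" "\<not> (b2 \<and> c2)" "\<not> (b3 \<and> c3)"
  using assms by blast+


lemma sum_UNIV_3: "sum f (UNIV::3 set) = f 1 + f 2 + f 3" by (rule sum_3)

lemma GU_entry:
  assumes "A ** ctrans A = mat c"
  shows "A$k$1 * gcnj (A$m$1) + A$k$2 * gcnj (A$m$2) + A$k$3 * gcnj (A$m$3) = (if k = m then c else 0)"
proof -
  have "(A ** ctrans A) $ k $ m = (if k = m then c else 0)" using assms by (simp add: mat_nth)
  then show ?thesis by (simp add: mm_nth sum_UNIV_3)
qed

lemma GU_rows:
  assumes "A \<in> GU3_Z2"
  shows "(r (A$k$1) \<noteq> r (A$k$2)) \<noteq> r (A$k$3)"
    "k \<noteq> m \<Longrightarrow> \<not> (((r (A$k$1) \<and> r (A$m$1)) \<noteq> (r (A$k$2) \<and> r (A$m$2))) \<noteq> (r (A$k$3) \<and> r (A$m$3)))"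
proof -
  obtain l where l: "l dvd 1" "A ** ctrans A = mat (gof l)" using GU_E[OF assms] by blast
  have "r (A$k$1 * gcnj (A$k$1) + A$k$2 * gcnj (A$k$2) + A$k$3 * gcnj (A$k$3))"
    using GU_entry[OF l(2), of k k] r_gof_unit[OF l(1)] by simp
  then show "(r (A$k$1) \<noteq> r (A$k$2)) \<noteq> r (A$k$3)" by simp
  assume "k \<noteq> m"
  then have "\<not> r (A$k$1 * gcnj (A$m$1) + A$k$2 * gcnj (A$m$2) + A$k$3 * gcnj (A$m$3))"
    using GU_entry[OF l(2), of k m] by simp
  then show "\<not> (((r (A$k$1) \<and> r (A$m$1)) \<noteq> (r (A$k$2) \<and> r (A$m$2))) \<noteq> (r (A$k$3) \<and> r (A$m$3)))" by simp
qed

lemma GU_perm: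
  assumes "A \<in> GU3_Z2"
  shows "r (A$k$1) \<or> r (A$k$2) \<or> r (A$k$3)"
    "r (A$k$j) \<Longrightarrow> r (A$k$j') \<Longrightarrow> j = j'"
    "r (A$k$j) \<Longrightarrow> r (A$l$j) \<Longrightarrow> k = l"
proof -
  note R = GU_rows[OF assms]
  note C = comb9[OF R(1)[of 1] R(1)[of 2] R(1)[of 3] R(2)[OF three_distinct(1)] R(2)[OF three_distinct(2)] R(2)[OF three_distinct(3)]]
  show "r (A$k$1) \<or> r (A$k$2) \<or> r (A$k$3)" using R(1)[of k] by blast
  show "r (A$k$j) \<Longrightarrow> r (A$k$j') \<Longrightarrow> j = j'"
    using C exhaust_3[of k] exhaust_3[of j] exhaust_3[of j'] by auto
  show "r (A$k$j) \<Longrightarrow> r (A$l$j) \<Longrightarrow> k = l"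
    using C exhaust_3[of k] exhaust_3[of l] exhaust_3[of j] by auto
qed

definition sig :: "mat3 \<Rightarrow> 3 \<Rightarrow> 3" where "sig A k = (THE j. r (A$k$j))"

lemma sig_props:
  assumes "A \<in> GU3_Z2"
  shows "r (A$k$(sig A k))" "r (A$k$j) \<longleftrightarrow> j = sig A k" "bij (sig A)"
proof -
  have ex: "\<exists>j. r (A$k$j)" for k using GU_perm(1)[OF assms, of k] by blast
  have u: "\<exists>!j. r (A$k$j)" for k using ex GU_perm(2)[OF assms] by blast
  show s: "r (A$k$(sig A k))" for k unfolding sig_def using theI'[OF u] .
  show "r (A$k$j) \<longleftrightarrow> j = sig A k" using s GU_perm(2)[OF assms] by blast
  have "inj (sig A)" using s GU_perm(3)[OF assms] by (metis injI)
  then show "bij (sig A)" using finite_UNIV_inj_surj[of "sig A"] by (simp add: bij_def)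
qed


section \<open>The subgroup K2t\<close>

lemma K_dvd: "(2 + 2 * gi) dvd x \<longleftrightarrow> p ^ 3 dvd (x::G)"
proof
  assume "(2 + 2 * gi) dvd x"
  then obtain y where "x = (2 + 2 * gi) * y" by (rule dvdE)
  then have "x = (- gi * p ^ 3) * y" by (simp only: K_eq)
  then have "x = p ^ 3 * (- gi * y)" by (simp add: algebra_simps)
  then show "p ^ 3 dvd x" by simp
next
  assume "p ^ 3 dvd x"
  then obtain y where y: "x = p ^ 3 * y" by (rule dvdE)
  have "(2 + 2 * gi) * (gi * y) = (- gi * p ^ 3) * (gi * y)" by (simp only: K_eq)
  also have "\<dots> = - (gi * gi) * p ^ 3 * y" by (simp add: algebra_simps)
  also have "\<dots> = x" by (simp add: gi_sq y)
  finally show "(2 + 2 * gi) dvd x" by (metis dvd_triv_left)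
qed

lemma K2t_iff: "A \<in> K2t \<longleftrightarrow> A \<in> GU3_Z2 \<and> (\<forall>k. p ^ 3 dvd (A$k$k - 1))"
  by (simp add: K2t_def K_dvd)

lemma dvd3_dvd1: "p ^ 3 dvd (x::G) \<Longrightarrow> p dvd x"
proof -
  assume "p ^ 3 dvd x"
  moreover have "p dvd p ^ 3" by (simp add: power3_eq_cube)
  ultimately show ?thesis using dvd_trans by blast
qed

lemma distinct_others: "\<exists>l m. k \<noteq> l \<and> k \<noteq> m \<and> l \<noteq> (m::3)"
  using exhaust_3[of k] by (metis three_distinct)

lemma sum_dist3: "k \<noteq> l \<Longrightarrow> k \<noteq> m \<Longrightarrow> l \<noteq> (m::3) \<Longrightarrow> sum f UNIV = f k + f l + f m"
proof -
  assume d: "k \<noteq> l" "k \<noteq> m" "l \<noteq> m"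
  have "card {k, l, m} = 3" using d by simp
  then have "{k, l, m} = (UNIV::3 set)" by (intro card_subset_eq) auto
  then have "sum f UNIV = sum f {k, l, m}" by simp
  also have "\<dots> = f k + f l + f m" using d by (simp add: add.assoc)
  finally show ?thesis .
qed

definition pq :: "G \<Rightarrow> G" where "pq x = (SOME a. x = p * a)"

lemma pq: "p dvd x \<Longrightarrow> x = p * pq x"
  unfolding pq_def by (rule someI_ex) (auto simp: dvd_def)

lemma K2t_diag: "A \<in> K2t \<Longrightarrow> r (A$k$k)"
  using K2t_iff dvd3_dvd1 r_alt by blast

lemma K2t_off: "A \<in> K2t \<Longrightarrow> k \<noteq> l \<Longrightarrow> p dvd A$k$l"
proof -
  assume A: "A \<in> K2t" and kl: "k \<noteq> l"
  have G: "A \<in> GU3_Z2" using A K2t_iff by blast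
  have "k = sig A k" using sig_props(2)[OF G] K2t_diag[OF A] by blast
  then have "\<not> r (A$k$l)" using sig_props(2)[OF G, of k l] kl by simp
  then show ?thesis by (simp add: r_def)
qed

lemma r_norm[simp]: "r (x * gcnj x) = r x" by simp

lemma sym_lemma:
  assumes A: "A \<in> K2t" and d: "k \<noteq> l" "k \<noteq> m" "l \<noteq> m"
  shows "r (pq (A$k$l)) = r (pq (A$l$k))"
proof -
  have G: "A \<in> GU3_Z2" using A K2t_iff by blast
  obtain lam where lam: "lam dvd 1" "A ** ctrans A = mat (gof lam)" using GU_E[OF G] by blast
  have "(A ** ctrans A) $ k $ l = 0" using lam d by (simp add: mat_nth)
  then have e: "A$k$k * gcnj (A$l$k) + A$k$l * gcnj (A$l$l) + A$k$m * gcnj (A$l$m) = 0"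
    by (simp add: mm_nth sum_dist3[OF d])
  define alk where "alk = pq (A$l$k)"
  define akl where "akl = pq (A$k$l)"
  define akm where "akm = pq (A$k$m)"
  define alm where "alm = pq (A$l$m)"
  have h: "A$l$k = p * alk" "A$k$l = p * akl" "A$k$m = p * akm" "A$l$m = p * alm"
    unfolding alk_def akl_def akm_def alm_def
    by (rule pq, rule K2t_off[OF A], use d in simp)+
  define XX where "XX = A$k$k * (- gi) * gcnj alk + akl * gcnj (A$l$l) + akm * (- gi) * p * gcnj alm"
  have "p * XX = A$k$k * gcnj (A$l$k) + A$k$l * gcnj (A$l$l) + A$k$m * gcnj (A$l$m)"
    unfolding XX_def h by (simp add: cnj_p algebra_simps)
  then have "p * XX = 0" using e by simp
  then have "XX = 0" by (rule p_cancel0)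
  then have "\<not> r XX" by simp
  then show ?thesis using K2t_diag[OF A] unfolding XX_def akl_def alk_def by simp
qed

lemma norm_p: "(p * a) * gcnj (p * a) = p * p * (- gi * (a * gcnj a))"
  by (simp add: cnj_p algebra_simps)

lemma norm_diag: "p ^ 3 dvd (x - 1) \<Longrightarrow> p ^ 3 dvd (x * gcnj x - 1)"
proof -
  assume a: "p ^ 3 dvd (x - 1)"
  have eq: "x * gcnj x - 1 = (x - 1) * gcnj x + (gcnj x - 1)" by (simp add: algebra_simps)
  have "p ^ 3 dvd gcnj x - 1" using dvd_cnj[OF a] by simp
  then show ?thesis using a by (simp only: eq) (intro dvd_add dvd_mult2)
qed

lemma p2_cancel: "p ^ 3 dvd p * p * Y \<Longrightarrow> p dvd Y"
proof -
  assume "p ^ 3 dvd p * p * Y"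
  then have "p * (p * p) dvd p * (p * Y)" by (simp add: power3_eq_cube mult.assoc)
  then have "p * p dvd p * Y" by (rule p_dvd_cancel)
  then show "p dvd Y" by (rule p_dvd_cancel)
qed

lemma row_lemma:
  assumes A: "A \<in> K2t" and d: "k \<noteq> l" "k \<noteq> m" "l \<noteq> m"
  shows "\<not> (((r (pq (A$k$l)) \<noteq> r (pq (A$k$m))) \<noteq> r (pq (A$l$k))) \<noteq> r (pq (A$l$m)))"
proof -
  have G: "A \<in> GU3_Z2" using A K2t_iff by blast
  obtain lam where lam: "lam dvd 1" "A ** ctrans A = mat (gof lam)" using GU_E[OF G] by blast
  have d': "l \<noteq> k" "l \<noteq> m" "k \<noteq> m" using d by auto
  have q: "(A ** ctrans A) $ k $ k = gof lam" "(A ** ctrans A) $ l $ l = gof lam" using lam by (simp_all add: mat_nth)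
  have "(A ** ctrans A) $ k $ k = A$k$k * gcnj (A$k$k) + A$k$l * gcnj (A$k$l) + A$k$m * gcnj (A$k$m)"
    by (simp only: mm_nth sum_dist3[OF d] ct_nth)
  then have e1: "A$k$k * gcnj (A$k$k) + A$k$l * gcnj (A$k$l) + A$k$m * gcnj (A$k$m) = gof lam"
    using q(1) by simp
  have "(A ** ctrans A) $ l $ l = A$l$l * gcnj (A$l$l) + A$l$k * gcnj (A$l$k) + A$l$m * gcnj (A$l$m)"
    by (simp only: mm_nth sum_dist3[OF d'] ct_nth)
  then have e2: "A$l$l * gcnj (A$l$l) + A$l$k * gcnj (A$l$k) + A$l$m * gcnj (A$l$m) = gof lam"
    using q(2) by simp
  define alk where "alk = pq (A$l$k)"
  define akl where "akl = pq (A$k$l)"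
  define akm where "akm = pq (A$k$m)"
  define alm where "alm = pq (A$l$m)"
  have h: "A$l$k = p * alk" "A$k$l = p * akl" "A$k$m = p * akm" "A$l$m = p * alm"
    unfolding alk_def akl_def akm_def alm_def
    by (rule pq, rule K2t_off[OF A], use d in simp)+
  define Y where "Y = - gi * (akl * gcnj akl + akm * gcnj akm - alk * gcnj alk - alm * gcnj alm)"
  have pY: "p * p * Y = (A$l$l * gcnj (A$l$l) - 1) - (A$k$k * gcnj (A$k$k) - 1)"
  proof -
    have "p * p * Y = (A$k$l * gcnj (A$k$l) + A$k$m * gcnj (A$k$m)) - (A$l$k * gcnj (A$l$k) + A$l$m * gcnj (A$l$m))"
      unfolding h norm_p Y_def by (simp add: algebra_simps)
    also have "\<dots> = (A$l$l * gcnj (A$l$l) - 1) - (A$k$k * gcnj (A$k$k) - 1)"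
      using e1 e2 by (simp add: algebra_simps)
    finally show ?thesis .
  qed
  have a1: "p ^ 3 dvd A$k$k - 1" "p ^ 3 dvd A$l$l - 1" using A by (simp_all add: K2t_iff)
  have "p ^ 3 dvd (A$l$l * gcnj (A$l$l) - 1) - (A$k$k * gcnj (A$k$k) - 1)"
    by (rule dvd_diff[OF norm_diag[OF a1(2)] norm_diag[OF a1(1)]])
  then have "p ^ 3 dvd p * p * Y" by (simp only: pY)
  then have "p dvd Y" by (rule p2_cancel)
  then have "\<not> r Y" by (simp add: r_def)
  then show ?thesis unfolding Y_def akl_def akm_def alk_def alm_def by simp
qed


lemma K2t_const:
  assumes A: "A \<in> K2t" and kl: "k \<noteq> l"
  shows "r (pq (A$k$l)) = r (pq (A$1$2))"
proof -
  note td = three_distinct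
  have s1: "r (pq (A$1$2)) = r (pq (A$2$1))" by (rule sym_lemma[OF A td(1) td(2) td(3)])
  have s2: "r (pq (A$1$3)) = r (pq (A$3$1))" by (rule sym_lemma[OF A td(2) td(1) td(6)])
  have s3: "r (pq (A$2$3)) = r (pq (A$3$2))" by (rule sym_lemma[OF A td(3) td(4) td(5)])
  have r1: "\<not> (((r (pq (A$1$2)) \<noteq> r (pq (A$1$3))) \<noteq> r (pq (A$2$1))) \<noteq> r (pq (A$2$3)))"
    by (rule row_lemma[OF A td(1) td(2) td(3)])
  have r2: "\<not> (((r (pq (A$1$3)) \<noteq> r (pq (A$1$2))) \<noteq> r (pq (A$3$1))) \<noteq> r (pq (A$3$2)))"
    by (rule row_lemma[OF A td(2) td(1) td(6)])
  have e: "r (pq (A$1$3)) = r (pq (A$1$2))" "r (pq (A$2$1)) = r (pq (A$1$2))"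
    "r (pq (A$2$3)) = r (pq (A$1$2))" "r (pq (A$3$1)) = r (pq (A$1$2))" "r (pq (A$3$2)) = r (pq (A$1$2))"
    using s1 s2 s3 r1 r2 by blast+
  show ?thesis using e kl exhaust_3[of k] exhaust_3[of l] by auto
qed

lemma K2t_lam:
  assumes A: "A \<in> K2t" and lam: "A ** ctrans A = mat (gof lam)"
  shows "p ^ 3 dvd gof lam - 1"
proof -
  note td = three_distinct
  have "(A ** ctrans A) $ 1 $ 1 = A$1$1 * gcnj (A$1$1) + A$1$2 * gcnj (A$1$2) + A$1$3 * gcnj (A$1$3)"
    by (simp only: mm_nth sum_dist3[OF td(1) td(2) td(3)] ct_nth)
  then have e: "A$1$1 * gcnj (A$1$1) + A$1$2 * gcnj (A$1$2) + A$1$3 * gcnj (A$1$3) = gof lam"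
    using lam by (simp add: mat_nth)
  define a2 where "a2 = pq (A$1$2)"
  define a3 where "a3 = pq (A$1$3)"
  have h: "A$1$2 = p * a2" "A$1$3 = p * a3" unfolding a2_def a3_def
    by (rule pq, rule K2t_off[OF A], simp)+
  define Z where "Z = - gi * (a2 * gcnj a2 + a3 * gcnj a3)"
  have eq: "gof lam - 1 = (A$1$1 * gcnj (A$1$1) - 1) + p * p * Z"
    using e unfolding Z_def h norm_p by (simp add: algebra_simps)
  have d1: "p ^ 3 dvd A$1$1 * gcnj (A$1$1) - 1" using A norm_diag by (simp add: K2t_iff)
  have d2: "p ^ 3 dvd p * p * Z"
  proof -
    have "r a2 = r a3" using K2t_const[OF A td(2)] unfolding a2_def a3_def by simp
    then have "\<not> r Z" unfolding Z_def by simp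
    then have "p dvd Z" by (simp add: r_def)
    then obtain w where "Z = p * w" by (rule dvdE)
    then have "p * p * Z = p ^ 3 * w" by (simp add: power3_eq_cube mult.assoc)
    then show ?thesis by simp
  qed
  have "p ^ 3 dvd (A$1$1 * gcnj (A$1$1) - 1) + p * p * Z" using d1 d2 by (rule dvd_add)
  then show ?thesis by (simp only: eq)
qed

lemma dvd3_mult1: "p ^ 3 dvd (x - 1) \<Longrightarrow> p ^ 3 dvd (y - 1) \<Longrightarrow> p ^ 3 dvd (x * y - (1::G))"
proof -
  assume a: "p ^ 3 dvd (x - 1)" "p ^ 3 dvd (y - 1)"
  have "x * y - 1 = (x - 1) * y + (y - 1)" by (simp add: algebra_simps)
  then show ?thesis using a by (simp only:) (intro dvd_add dvd_mult2)
qed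

lemma K2t_mult:
  assumes A: "A \<in> K2t" and B: "B \<in> K2t"
  shows "A ** B \<in> K2t"
proof -
  have G: "A ** B \<in> GU3_Z2" using A B GU_mult K2t_iff by blast
  have "p ^ 3 dvd (A ** B)$k$k - 1" for k
  proof -
    obtain l m where d: "k \<noteq> l" "k \<noteq> m" "l \<noteq> m" using distinct_others by blast
    have e: "(A ** B)$k$k = A$k$k * B$k$k + A$k$l * B$l$k + A$k$m * B$m$k"
      by (simp only: mm_nth sum_dist3[OF d])
    define akl where "akl = pq (A$k$l)"
    define akm where "akm = pq (A$k$m)"
    define blk where "blk = pq (B$l$k)"
    define bmk where "bmk = pq (B$m$k)"
    have h1: "A$k$l = p * akl" "A$k$m = p * akm" unfolding akl_def akm_def
      by (rule pq, rule K2t_off[OF A], use d in simp)+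
    have h2: "B$l$k = p * blk" "B$m$k = p * bmk" unfolding blk_def bmk_def
      by (rule pq, rule K2t_off[OF B], use d in simp)+
    note h = h1 h2
    have "r akl = r akm" "r blk = r bmk"
      using K2t_const[OF A d(1)] K2t_const[OF A d(2)] K2t_const[OF B, of l k] K2t_const[OF B, of m k] d
      unfolding akl_def akm_def blk_def bmk_def by auto
    then have "\<not> r (akl * blk + akm * bmk)" by simp
    then have "p dvd (akl * blk + akm * bmk)" by (simp add: r_def)
    then obtain w where w: "akl * blk + akm * bmk = p * w" by (rule dvdE)
    have eq: "(A ** B)$k$k - 1 = (A$k$k * B$k$k - 1) + p ^ 3 * w"
      unfolding e h using w[symmetric] by (simp add: power3_eq_cube algebra_simps)
    have "p ^ 3 dvd A$k$k * B$k$k - 1" using A B dvd3_mult1 by (simp add: K2t_iff)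
    then have "p ^ 3 dvd (A$k$k * B$k$k - 1) + p ^ 3 * w" by (rule dvd_add) simp
    then show ?thesis by (simp only: eq)
  qed
  then show ?thesis using G by (simp add: K2t_iff)
qed


lemma one_K2t: "mat 1 \<in> K2t"
  using GU_one by (simp add: K2t_iff mat_nth)

lemma K2t_inv:
  assumes A: "A \<in> K2t"
  shows "inv\<^bsub>GU3_Z2_grp\<^esub> A \<in> K2t"
proof -
  have G: "A \<in> GU3_Z2" using A K2t_iff by blast
  obtain lam where lam: "lam dvd 1" "A ** ctrans A = mat (gof lam)" "ctrans A ** A = mat (gof lam)"
    using GU_E[OF G] by blast
  obtain m where "1 = lam * m" using lam(1) by (rule dvdE)
  then have lm: "lam * m = 1" by simp
  have eq: "inv\<^bsub>GU3_Z2_grp\<^esub> A = smat (gof m) (ctrans A)" by (rule GU_inv_eq[OF G lam(2,3) lm])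
  have G2: "smat (gof m) (ctrans A) \<in> GU3_Z2" by (rule GU_inv(1)[OF G lam(2,3) lm])
  have l3: "p ^ 3 dvd gof lam - 1" by (rule K2t_lam[OF A lam(2)])
  have gm: "gof m * gof lam = 1" using lm by (metis gof_simps(3) gof_simps(6) mult.commute)
  have "gof m - 1 = - gof m * (gof lam - 1)" using gm by (simp add: algebra_simps)
  then have m3: "p ^ 3 dvd gof m - 1" using l3 by (simp add: dvd_mult)
  have "p ^ 3 dvd gof m * gcnj (A$k$k) - 1" for k
  proof -
    have "p ^ 3 dvd gcnj (A$k$k - 1)" using A by (intro dvd_cnj) (simp add: K2t_iff)
    then have "p ^ 3 dvd gcnj (A$k$k) - 1" by simp
    then show ?thesis using m3 dvd3_mult1 by blast
  qed
  then have "smat (gof m) (ctrans A) \<in> K2t" using G2 by (simp add: K2t_iff)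
  then show ?thesis using eq by simp
qed

lemma subgroup_K2t: "subgroup K2t GU3_Z2_grp"
proof (rule group.subgroupI[OF group_GU])
  show "K2t \<subseteq> carrier GU3_Z2_grp" using K2t_iff by auto
  show "K2t \<noteq> {}" using one_K2t by blast
  show "inv\<^bsub>GU3_Z2_grp\<^esub> a \<in> K2t" if "a \<in> K2t" for a using K2t_inv that .
  show "a \<otimes>\<^bsub>GU3_Z2_grp\<^esub> b \<in> K2t" if "a \<in> K2t" "b \<in> K2t" for a b
    using K2t_mult that by simp
qed

section \<open>Decomposition\<close>

lemma unit_adjust:
  assumes "r x"
  shows "\<exists>u\<in>U4. p ^ 3 dvd (x * u - 1)"
proof -
  have "p dvd x - 1" using assms r_alt by blast
  then obtain t where t: "x - 1 = p * t" by (rule dvdE)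
  have x: "x = 1 + p * t" using t by (simp add: algebra_simps)
  consider (a) t' where "t = p * t'" | (b) t' where "t - 1 = p * t'"
    using R1[of t] by (auto elim: dvdE)
  then show ?thesis
  proof cases
    case a
    consider (aa) s where "t' = p * s" | (ab) s where "t' - 1 = p * s"
      using R1[of t'] by (auto elim: dvdE)
    then show ?thesis
    proof cases
      case aa
      then have "x * 1 - 1 = p ^ 3 * s" using x a by (simp add: power3_eq_cube)
      then show ?thesis by (intro bexI[of _ 1]) (simp_all add: U4_def)
    next
      case ab
      then have "x = 1 + p * (p * (1 + p * s))" using x a by (simp add: algebra_simps)
      then have "x * (-1) - 1 = p ^ 3 * (gi - s)" unfolding p_def by (simp add: gauss_eq_iff algebra_simps power3_eq_cube)
      then show ?thesis by (intro bexI[of _ "-1"]) (simp_all add: U4_def)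
    qed
  next
    case b
    consider (ba) s where "t' = p * s" | (bb) s where "t' - 1 = p * s"
      using R1[of t'] by (auto elim: dvdE)
    then show ?thesis
    proof cases
      case ba
      then have "x = 1 + p * (1 + p * (p * s))" using x b by (simp add: algebra_simps)
      then have "x * gi - 1 = p ^ 3 * (1 + s * gi)" unfolding p_def by (simp add: gauss_eq_iff algebra_simps power3_eq_cube)
      then show ?thesis by (intro bexI[of _ gi]) (simp_all add: U4_def)
    next
      case bb
      then have "x = 1 + p * (1 + p * (1 + p * s))" using x b by (simp add: algebra_simps)
      then have "x * (- gi) - 1 = p ^ 3 * (- 1 - s * gi)" unfolding p_def by (simp add: gauss_eq_iff algebra_simps power3_eq_cube)
      then show ?thesis by (intro bexI[of _ "- gi"]) (simp_all add: U4_def)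
    qed
  qed
qed


lemma ct_monom_nth: "(B ** ctrans (monom \<sigma> u)) $ k $ l = B$k$(\<sigma> l) * gcnj (u l)"
proof -
  have "(B ** ctrans (monom \<sigma> u)) $ k $ l = (\<Sum>j\<in>UNIV. B$k$j * gcnj (if j = \<sigma> l then u l else 0))"
    unfolding mm_nth ct_nth monom_nth ..
  also have "\<dots> = (\<Sum>j\<in>UNIV. if j = \<sigma> l then B$k$j * gcnj (u l) else 0)"
    by (rule sum.cong) auto
  also have "\<dots> = B$k$(\<sigma> l) * gcnj (u l)" by (simp only: sum.delta[OF finite]) simp
  finally show ?thesis .
qed

lemma monom_left_nth: "(monom \<sigma> u ** B) $ k $ l = u k * B$(\<sigma> k)$l"
proof -
  have "(monom \<sigma> u ** B) $ k $ l = (\<Sum>j\<in>UNIV. (if j = \<sigma> k then u k else 0) * B$j$l)"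
    unfolding mm_nth monom_nth ..
  also have "\<dots> = (\<Sum>j\<in>UNIV. if j = \<sigma> k then u k * B$j$l else 0)"
    by (rule sum.cong) auto
  also have "\<dots> = u k * B$(\<sigma> k)$l" by (simp only: sum.delta[OF finite]) simp
  finally show ?thesis .
qed

lemma decomp:
  assumes A: "A \<in> GU3_Z2"
  shows "\<exists>K\<in>K2t. \<exists>M\<in>GU3_Z. A = K ** M"
proof -
  define \<sigma> where "\<sigma> = sig A"
  have bs: "bij \<sigma>" using sig_props(3)[OF A] by (simp add: \<sigma>_def)
  have rs: "r (A$k$(\<sigma> k))" for k using sig_props(1)[OF A] by (simp add: \<sigma>_def)
  define u where "u k = (SOME v. v \<in> U4 \<and> p ^ 3 dvd (A$k$(\<sigma> k) * v - 1))" for k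
  have u: "u k \<in> U4 \<and> p ^ 3 dvd (A$k$(\<sigma> k) * u k - 1)" for k
  proof -
    obtain v where v: "v \<in> U4" "p ^ 3 dvd (A$k$(\<sigma> k) * v - 1)" using unit_adjust[OF rs[of k]] by blast
    show ?thesis unfolding u_def
      by (rule someI[of "\<lambda>v. v \<in> U4 \<and> p ^ 3 dvd (A$k$(\<sigma> k) * v - 1)" v]) (use v in blast)
  qed
  define M where "M = monom \<sigma> (\<lambda>k. gcnj (u k))"
  have MZ: "M \<in> GU3_Z" unfolding M_def GU3_Z_eq mem_Collect_eq
    by (intro exI[of _ \<sigma>] exI[of _ "\<lambda>k. gcnj (u k)"]) (simp add: bs u U4_cnj)
  have MU: "M ** ctrans M = mat 1" "ctrans M ** M = mat 1"
    using monom_unitary[OF bs, of "\<lambda>k. gcnj (u k)"] u U4_cnj by (simp_all add: M_def)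
  define K where "K = A ** ctrans M"
  have KG: "K \<in> GU3_Z2" unfolding K_def using A GU3_Z_sub ct_GU3_Z[OF MZ] GU_mult by blast
  have "K$k$k = A$k$(\<sigma> k) * u k" for k unfolding K_def M_def by (simp add: ct_monom_nth)
  then have "K \<in> K2t" using KG u by (simp add: K2t_iff)
  moreover have "A = K ** M" unfolding K_def using MU by (simp add: matrix_mul_assoc[symmetric])
  ultimately show ?thesis using MZ by blast
qed

lemma dvd3_neg1: "\<not> p ^ 3 dvd (-1::G)"
  using dvd3_dvd1 not_p_dvd_1 by (metis dvd_minus_iff)

lemma U4_K: "u \<in> U4 \<Longrightarrow> p ^ 3 dvd (u - 1) \<Longrightarrow> u = 1"
proof -
  assume u: "u \<in> U4" and d: "p ^ 3 dvd (u - 1)"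
  have p3: "p ^ 3 = p * (p * p)" by (simp add: power3_eq_cube)
  show "u = 1"
  proof (rule ccontr)
    assume n1: "u \<noteq> 1"
    then consider "u = -1" | "u = gi" | "u = - gi" using u by (auto simp: U4_def)
    then show False
    proof cases
      case 1
      then have "u - 1 = - (2::G)" by simp
      also have "\<dots> = p * p * gi" by (simp only: two_eq) (simp add: algebra_simps)
      finally have "u - 1 = p * p * gi" .
      then have "p dvd gi" using d p2_cancel by simp
      then show False using r_gi by (simp add: r_def)
    next
      case 2
      then have "u - 1 = p * gi" by (simp add: p_def gauss_eq_iff)
      then have "p * (p * p) dvd p * gi" using d p3 by simp
      then have "p * p dvd gi" by (rule p_dvd_cancel)
      then have "p dvd gi" using dvd_mult_left by blast
      then show False using r_gi by (simp add: r_def)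
    next
      case 3
      then have "u - 1 = p * (-1)" by (simp add: p_def gauss_eq_iff)
      then have "p * (p * p) dvd p * (-1)" using d p3 by simp
      then have "p * p dvd -1" by (rule p_dvd_cancel)
      then have "p dvd 1" using dvd_mult_left by fastforce
      then show False using not_p_dvd_1 by simp
    qed
  qed
qed

lemma inter_K2t: "K2t \<inter> GU3_Z = {mat 1}"
proof
  show "{mat 1} \<subseteq> K2t \<inter> GU3_Z"
  proof -
    have "mat 1 \<in> GU3_Z" unfolding GU3_Z_eq mem_Collect_eq
      by (intro exI[of _ id] exI[of _ "\<lambda>_. 1::G"]) (simp add: U4_def monom_id)
    then show ?thesis using one_K2t by simp
  qed
  show "K2t \<inter> GU3_Z \<subseteq> {mat 1}"
  proof
    fix M assume M: "M \<in> K2t \<inter> GU3_Z"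
    then obtain \<sigma> u where Mm: "M = monom \<sigma> u" "bij \<sigma>" "\<forall>k. u k \<in> U4" by (auto simp: GU3_Z_eq)
    have d: "p ^ 3 dvd (M$k$k - 1)" for k using M by (simp add: K2t_iff)
    have s: "\<sigma> k = k" for k
    proof (rule ccontr)
      assume "\<sigma> k \<noteq> k"
      then have "M$k$k - 1 = -1" unfolding Mm(1) monom_nth by auto
      then show False using d[of k] dvd3_neg1 by simp
    qed
    have "u k = 1" for k
    proof -
      have "M$k$k = u k" unfolding Mm(1) monom_nth using s[of k] by simp
      then show ?thesis using U4_K Mm(3) d[of k] by simp
    qed
    then have "M = monom id (\<lambda>_. 1)" unfolding Mm(1) using s by (simp add: vec_eq_iff monom_nth)
    then show "M \<in> {mat 1}" by (simp add: monom_id)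
  qed
qed


lemma conj_monom_K2t:
  assumes h: "h \<in> K2t" and M: "M \<in> GU3_Z"
  shows "M ** h ** ctrans M \<in> K2t"
proof -
  obtain \<sigma> u where Mm: "M = monom \<sigma> u" "bij \<sigma>" "\<forall>k. u k \<in> U4" using M by (auto simp: GU3_Z_eq)
  have G: "M ** h ** ctrans M \<in> GU3_Z2"
    using h M GU3_Z_sub ct_GU3_Z[OF M] GU_mult K2t_iff by blast
  have "(M ** h ** ctrans M) $ k $ k = h $ (\<sigma> k) $ (\<sigma> k) * (u k * gcnj (u k))" for k
    unfolding Mm(1) by (simp add: ct_monom_nth monom_left_nth mult_ac)
  then have "(M ** h ** ctrans M) $ k $ k = h $ (\<sigma> k) $ (\<sigma> k)" for k using Mm(3) U4_cnj by simp
  then show ?thesis using G h by (simp add: K2t_iff)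
qed

lemma normal_K2t: "K2t \<lhd> GU3_Z2_grp"
proof (rule group.normal_invI[OF group_GU subgroup_K2t])
  fix x h assume x: "x \<in> carrier GU3_Z2_grp" and h: "h \<in> K2t"
  obtain K M where K: "K \<in> K2t" and M: "M \<in> GU3_Z" and xe: "x = K ** M" using decomp[of x] x by auto
  have KG: "K \<in> carrier GU3_Z2_grp" "M \<in> carrier GU3_Z2_grp" using K M K2t_iff GU3_Z_sub by auto
  have "inv\<^bsub>GU3_Z2_grp\<^esub> x = inv\<^bsub>GU3_Z2_grp\<^esub> M ** inv\<^bsub>GU3_Z2_grp\<^esub> K"
    using group.inv_mult_group[OF group_GU KG] xe by simp
  also have "\<dots> = ctrans M ** inv\<^bsub>GU3_Z2_grp\<^esub> K" using GU3_Z_inv[OF M] by simp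
  finally have ix: "inv\<^bsub>GU3_Z2_grp\<^esub> x = ctrans M ** inv\<^bsub>GU3_Z2_grp\<^esub> K" .
  have "x ** h ** inv\<^bsub>GU3_Z2_grp\<^esub> x = K ** ((M ** h ** ctrans M) ** inv\<^bsub>GU3_Z2_grp\<^esub> K)"
    by (simp only: ix, simp only: xe matrix_mul_assoc)
  moreover have "K ** ((M ** h ** ctrans M) ** inv\<^bsub>GU3_Z2_grp\<^esub> K) \<in> K2t"
    using K2t_mult K K2t_mult conj_monom_K2t[OF h M] K2t_inv[OF K] by blast
  ultimately show "x \<otimes>\<^bsub>GU3_Z2_grp\<^esub> h \<otimes>\<^bsub>GU3_Z2_grp\<^esub> inv\<^bsub>GU3_Z2_grp\<^esub> x \<in> K2t" by simp
qed

lemma prod_K2t: "K2t <#>\<^bsub>GU3_Z2_grp\<^esub> GU3_Z = carrier GU3_Z2_grp"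
proof
  show "K2t <#>\<^bsub>GU3_Z2_grp\<^esub> GU3_Z \<subseteq> carrier GU3_Z2_grp"
    unfolding set_mult_def using K2t_iff GU3_Z_sub GU_mult by auto
  show "carrier GU3_Z2_grp \<subseteq> K2t <#>\<^bsub>GU3_Z2_grp\<^esub> GU3_Z"
  proof
    fix A assume "A \<in> carrier GU3_Z2_grp"
    then obtain K M where "K \<in> K2t" "M \<in> GU3_Z" "A = K ** M" using decomp[of A] by auto
    then show "A \<in> K2t <#>\<^bsub>GU3_Z2_grp\<^esub> GU3_Z" unfolding set_mult_def by auto
  qed
qed

theorem proposition5p5:
  shows "group GU3_Z2_grp \<and> subgroup K2t GU3_Z2_grp \<and> K2t \<lhd> GU3_Z2_grp
       \<and> subgroup GU3_Z GU3_Z2_grp \<and> K2t \<inter> GU3_Z = {\<one>\<^bsub>GU3_Z2_grp\<^esub>}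
       \<and> K2t <#>\<^bsub>GU3_Z2_grp\<^esub> GU3_Z = carrier GU3_Z2_grp"
  using group_GU subgroup_K2t normal_K2t subgroup_GU3_Z inter_K2t prod_K2t by simp

end
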